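(* Every completely metrizable space that is almost arcwise connected and locally almost arcwise connected is arcwise connected and locally arcwise connected.
   Context: Two sets $A,B$ are joined by an arc in a set $S$ if there is a continuous $\gamma:[0,1]\to X$ with $\gamma([0,1])\subseteq S$, $\gamma(0)\in A$, $\gamma(1)\in B$. $X$ is almost arcwise connected if each pair of nonempty open subsets of $X$ can be joined by an arc in $X$. $X$ is locally almost arcwise connected at $x$ if for every neighborhood $V$ of $x$ there is a neighborhood $U\subseteq V$ of $x$ such that each pair of nonempty open subsets of $U$ can be joined by an arc in $\overline V$; locally almost arcwise connected means this holds at every point. *)

theory Defs
  imports "HOL-Analysis.Analysis"
begin

definition joined_by_arc_in :: "'a topology \<Rightarrow> 'a set \<Rightarrow> 'a set \<Rightarrow> 'a set \<Rightarrow> bool" where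
  "joined_by_arc_in X S A B \<longleftrightarrow>
     (\<exists>g. pathin X g \<and> g ` {0..1} \<subseteq> S \<and> g 0 \<in> A \<and> g 1 \<in> B)"

definition almost_arcwise_connected :: "'a topology \<Rightarrow> bool" where
  "almost_arcwise_connected X \<longleftrightarrow>
     (\<forall>A B. openin X A \<and> A \<noteq> {} \<and> openin X B \<and> B \<noteq> {} \<longrightarrow>
            joined_by_arc_in X (topspace X) A B)"

definition nbhd_of :: "'a topology \<Rightarrow> 'a \<Rightarrow> 'a set \<Rightarrow> bool" where
  "nbhd_of X x N \<longleftrightarrow> N \<subseteq> topspace X \<and> (\<exists>W. openin X W \<and> x \<in> W \<and> W \<subseteq> N)"

definition locally_almost_arcwise_connected_at :: "'a topology \<Rightarrow> 'a \<Rightarrow> bool" where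
  "locally_almost_arcwise_connected_at X x \<longleftrightarrow>
     (\<forall>V. nbhd_of X x V \<longrightarrow>
        (\<exists>U. nbhd_of X x U \<and> U \<subseteq> V \<and>
           (\<forall>A B. openin (subtopology X U) A \<and> A \<noteq> {} \<and>
                  openin (subtopology X U) B \<and> B \<noteq> {} \<longrightarrow>
                  joined_by_arc_in X (X closure_of V) A B)))"

definition locally_almost_arcwise_connected :: "'a topology \<Rightarrow> bool" where
  "locally_almost_arcwise_connected X \<longleftrightarrow>
     (\<forall>x \<in> topspace X. locally_almost_arcwise_connected_at X x)"

end

theory Submission
  imports Defs
begin

definition osc :: "('a \<Rightarrow> 'a \<Rightarrow> real) \<Rightarrow> real set \<Rightarrow> (real \<Rightarrow> 'a) \<Rightarrow> real \<Rightarrow> bool" where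
  "osc d S f e \<longleftrightarrow> (\<forall>t\<in>S. \<exists>\<rho>>0. \<forall>s\<in>S. \<bar>s - t\<bar> < \<rho> \<longrightarrow> d (f s) (f t) < e)"

lemma osc_glue:
  assumes L: "osc d {lo..a} f e" and R: "osc d {a..hi} f e" and "lo \<le> a" "a \<le> hi"
  shows "osc d {lo..hi} f e"
  unfolding osc_def
proof
  fix t assume t: "t \<in> {lo..hi}"
  consider "t < a" | "t > a" | "t = a" by linarith
  then show "\<exists>\<rho>>0. \<forall>s\<in>{lo..hi}. \<bar>s - t\<bar> < \<rho> \<longrightarrow> d (f s) (f t) < e"
  proof cases
    case 1
    then obtain \<rho> where "\<rho>>0" and \<rho>: "\<forall>s\<in>{lo..a}. \<bar>s - t\<bar> < \<rho> \<longrightarrow> d (f s) (f t) < e"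
      using L t unfolding osc_def by (meson atLeastAtMost_iff less_eq_real_def)
    show ?thesis
      apply (rule exI[of _ "min \<rho> (a - t)"])
      using \<open>\<rho>>0\<close> 1 \<rho> by auto
  next
    case 2
    then obtain \<rho> where "\<rho>>0" and \<rho>: "\<forall>s\<in>{a..hi}. \<bar>s - t\<bar> < \<rho> \<longrightarrow> d (f s) (f t) < e"
      using R t unfolding osc_def by (meson atLeastAtMost_iff less_eq_real_def)
    show ?thesis
      apply (rule exI[of _ "min \<rho> (t - a)"])
      using \<open>\<rho>>0\<close> 2 \<rho> by auto
  next
    case 3
    obtain \<rho>1 where "\<rho>1>0" and \<rho>1: "\<forall>s\<in>{lo..a}. \<bar>s - t\<bar> < \<rho>1 \<longrightarrow> d (f s) (f t) < e"
      using L 3 \<open>lo \<le> a\<close> unfolding osc_def by (meson atLeastAtMost_iff order_refl)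
    obtain \<rho>2 where "\<rho>2>0" and \<rho>2: "\<forall>s\<in>{a..hi}. \<bar>s - t\<bar> < \<rho>2 \<longrightarrow> d (f s) (f t) < e"
      using R 3 \<open>a \<le> hi\<close> unfolding osc_def by (meson atLeastAtMost_iff order_refl)
    show ?thesis
    proof (intro exI[of _ "min \<rho>1 \<rho>2"] conjI ballI impI)
      show "min \<rho>1 \<rho>2 > 0" using \<open>\<rho>1>0\<close> \<open>\<rho>2>0\<close> by simp
      fix s assume s: "s \<in> {lo..hi}" "\<bar>s - t\<bar> < min \<rho>1 \<rho>2"
      show "d (f s) (f t) < e"
      proof (cases "s \<le> a")
        case True then show ?thesis using \<rho>1 s by auto
      next
        case False then show ?thesis using \<rho>2 s 3 by auto
      qed
    qed
  qed
qed

lemma osc_cong: "(\<And>s. s \<in> S \<Longrightarrow> f s = g s) \<Longrightarrow> osc d S f e = osc d S g e"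
  unfolding osc_def by auto

lemma osc_affine:
  assumes "osc d {0..1} h e" "c > 0"
  shows "osc d {b/c..(b+1)/c} (\<lambda>s. h (c * s - b)) e"
  unfolding osc_def
proof
  fix t assume t: "t \<in> {b/c..(b+1)/c}"
  have "c * t - b \<in> {0..1}" using t \<open>c>0\<close> by (auto simp: field_simps)
  then obtain \<rho> where "\<rho>>0" and \<rho>: "\<forall>s\<in>{0..1}. \<bar>s - (c * t-b)\<bar> < \<rho> \<longrightarrow> d (h s) (h (c * t-b)) < e"
    using assms(1) unfolding osc_def by blast
  show "\<exists>\<rho>>0. \<forall>s\<in>{b/c..(b+1)/c}. \<bar>s - t\<bar> < \<rho> \<longrightarrow> d (h (c * s - b)) (h (c * t - b)) < e"
  proof (intro exI[of _ "\<rho>/c"] conjI ballI impI)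
    show "\<rho>/c > 0" using \<open>\<rho>>0\<close> \<open>c>0\<close> by simp
    fix s assume s: "s \<in> {b/c..(b+1)/c}" and st: "\<bar>s - t\<bar> < \<rho>/c"
    have "c * s - b \<in> {0..1}" using s \<open>c>0\<close> by (auto simp: field_simps)
    moreover have "\<bar>(c * s - b) - (c * t-b)\<bar> < \<rho>"
    proof -
      have "\<bar>(c * s - b) - (c * t-b)\<bar> = c * \<bar>s - t\<bar>" using \<open>c>0\<close>
        by (simp add: abs_mult flip: right_diff_distrib)
      also have "\<dots> < \<rho>" using st \<open>c>0\<close> by (simp add: field_simps)
      finally show ?thesis .
    qed
    ultimately show "d (h (c * s - b)) (h (c * t - b)) < e" using \<rho> by blast
  qed
qed

primrec Phi :: "(nat \<Rightarrow> 'a \<Rightarrow> 'a \<Rightarrow> real \<Rightarrow> 'a) \<Rightarrow> nat \<Rightarrow> nat \<Rightarrow> 'a \<Rightarrow> 'a \<Rightarrow> real \<Rightarrow> 'a" where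
  "Phi G 0 k u v t = (if t < 1/2 then u else v)"
| "Phi G (Suc n) k u v t =
     (if t \<le> 1/3 then Phi G n (Suc k) u (G k u v 0) (3*t)
      else if t \<le> 2/3 then G k u v (3*t - 1)
      else Phi G n (Suc k) (G k u v 1) v (3*t - 2))"

lemma Phi_0 [simp]: "Phi G n k u v 0 = u"
  by (induction n arbitrary: k u v) auto

lemma Phi_1 [simp]: "Phi G n k u v 1 = v"
  by (induction n arbitrary: k u v) auto

lemma (in Metric_space) path_osc:
  assumes g: "pathin mtopology g" and e: "e > 0"
  shows "osc d {0..1} g e"
  unfolding osc_def
proof
  fix t :: real assume t: "t \<in> {0..1}"
  have "continuous_map (subtopology euclideanreal {0..1}) mtopology g"
    using g by (simp add: pathin_def)
  then obtain U where U: "openin (subtopology euclideanreal {0..1}) U" "t \<in> U"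
      and gU: "\<forall>y\<in>U. g y \<in> mball (g t) e"
    using t e unfolding continuous_map_to_metric topspace_euclidean_subtopology by blast
  obtain T where T: "open T" "U = T \<inter> {0..1}"
    using U(1) by (auto simp: openin_subtopology)
  obtain \<rho> where "\<rho> > 0" and \<rho>: "ball t \<rho> \<subseteq> T"
    using T U(2) open_contains_ball by blast
  show "\<exists>\<rho>>0. \<forall>s\<in>{0..1}. \<bar>s - t\<bar> < \<rho> \<longrightarrow> d (g s) (g t) < e"
  proof (intro exI[of _ \<rho>] conjI ballI impI)
    fix s :: real assume s: "s \<in> {0..1}" "\<bar>s - t\<bar> < \<rho>"
    then have "s \<in> U" using \<rho> T by (auto simp: dist_real_def abs_minus_commute)
    then show "d (g s) (g t) < e" using gU commute by auto
  qed (use \<open>\<rho>>0\<close> in auto)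
qed

lemma (in Metric_space) pathin_M: "pathin mtopology g \<Longrightarrow> t \<in> {0..1} \<Longrightarrow> g t \<in> M"
  unfolding pathin_def
  by (metis continuous_map_image_subset_topspace image_subset_iff topspace_euclidean_subtopology topspace_mtopology)

lemma (in Metric_space) lim_le:
  assumes lim: "limitin mtopology \<sigma> l sequentially" and a: "a \<in> M"
    and b: "\<And>m. m \<ge> N \<Longrightarrow> d a (\<sigma> m) \<le> r"
  shows "d a l \<le> r"
proof (rule ccontr)
  assume "\<not> d a l \<le> r"
  then have "d a l - r > 0" by simp
  then have "eventually (\<lambda>m. \<sigma> m \<in> M \<and> d (\<sigma> m) l < d a l - r) sequentially"
    using lim unfolding limitin_metric by blast
  then obtain N' where N': "\<And>m. m \<ge> N' \<Longrightarrow> \<sigma> m \<in> M \<and> d (\<sigma> m) l < d a l - r"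
    unfolding eventually_sequentially by blast
  define m where "m = max N N'"
  have "l \<in> M" using lim limitin_mspace by blast
  have "d a l \<le> d a (\<sigma> m) + d (\<sigma> m) l"
    using triangle a N'[of m] \<open>l \<in> M\<close> by (simp add: m_def)
  also have "\<dots> < r + (d a l - r)"
    using b[of m] N'[of m] by (simp add: m_def add_le_less_mono)
  finally show False by simp
qed

lemma small_n: "(e0::real) > 0 \<Longrightarrow> c > 0 \<Longrightarrow> \<exists>n. e0/2^n < c"
proof -
  assume "e0 > 0" "c > 0"
  then obtain n where "(1/2::real)^n < c/e0" using real_arch_pow_inv[of "c/e0" "1/2"] by auto
  then have "e0 * (1/2)^n < c" using \<open>e0>0\<close> by (simp add: field_simps)
  then show ?thesis by (auto simp: power_one_over field_simps)
qed

locale gluer = Metric_space M d for M :: "'a set" and d +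
  fixes good :: "nat \<Rightarrow> 'a \<Rightarrow> 'a \<Rightarrow> bool" and G :: "nat \<Rightarrow> 'a \<Rightarrow> 'a \<Rightarrow> real \<Rightarrow> 'a"
    and e0 :: real
  assumes e0: "e0 > 0"
  and good_M: "good k u v \<Longrightarrow> u \<in> M \<and> v \<in> M"
  and good_uv: "good k u v \<Longrightarrow> d u v < 2 * (e0/2^k)"
  and G_path: "good k u v \<Longrightarrow> pathin mtopology (G k u v)"
  and G_close: "good k u v \<Longrightarrow> t \<in> {0..1} \<Longrightarrow>
      d u (G k u v t) < 2*(e0/2^k) \<and> d v (G k u v t) < 2*(e0/2^k)"
  and G_good: "good k u v \<Longrightarrow> good (Suc k) u (G k u v 0) \<and> good (Suc k) (G k u v 1) v"
begin

lemma G_M: "good k u v \<Longrightarrow> t \<in> {0..1} \<Longrightarrow> G k u v t \<in> M"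
  using G_path pathin_M by blast

lemma Phi_M: "good k u v \<Longrightarrow> t \<in> {0..1} \<Longrightarrow> Phi G n k u v t \<in> M"
proof (induction n arbitrary: k u v t)
  case 0
  then show ?case using good_M by auto
next
  case (Suc n)
  have gg: "good (Suc k) u (G k u v 0)" "good (Suc k) (G k u v 1) v" using G_good[OF Suc.prems(1)] by auto
  show ?case
    using Suc.IH[OF gg(1), of "3*t"] Suc.IH[OF gg(2), of "3*t-2"] G_M[OF Suc.prems(1), of "3*t-1"] Suc.prems(2)
    by auto
qed

lemma Phi_step: "good k u v \<Longrightarrow> t \<in> {0..1} \<Longrightarrow>
   d (Phi G (Suc n) k u v t) (Phi G n k u v t) < 2*(e0/2^(k+n))"
proof (induction n arbitrary: k u v t)
  case 0
  note gc = G_close[OF 0(1)]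
  have uv: "u \<in> M" "v \<in> M" using good_M[OF 0(1)] by auto
  have pos: "0 < 2*(e0/2^k)" using e0 by simp
  have c0: "d (G k u v 0) u < 2*(e0/2^k)" using gc[of 0] commute by auto
  have c1: "d (G k u v 1) v < 2*(e0/2^k)" using gc[of 1] commute by auto
  have cm: "d (G k u v (3*t-1)) u < 2*(e0/2^k) \<and> d (G k u v (3*t-1)) v < 2*(e0/2^k)"
    if "1/3 < t" "t \<le> 2/3" using gc[of "3*t-1"] that commute by auto
  show ?case using uv pos c0 c1 cm 0(2) by auto
next
  case (Suc n)
  have gg: "good (Suc k) u (G k u v 0)" "good (Suc k) (G k u v 1) v" using G_good[OF Suc.prems(1)] by auto
  have pos: "0 < 2*(e0/2^(k + Suc n))" using e0 by simp
  have m: "G k u v (3*t-1) \<in> M" if "1/3 < t" "t \<le> 2/3"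
    using G_M[OF Suc.prems(1)] that by auto
  have i1: "t \<le> 1/3 \<Longrightarrow> d (Phi G (Suc n) (Suc k) u (G k u v 0) (3*t)) (Phi G n (Suc k) u (G k u v 0) (3*t))
      < 2*(e0/2^(k + Suc n))"
    using Suc.IH[OF gg(1), of "3*t"] Suc.prems(2) by auto
  have i3: "2/3 < t \<Longrightarrow> d (Phi G (Suc n) (Suc k) (G k u v 1) v (3*t-2)) (Phi G n (Suc k) (G k u v 1) v (3*t-2))
      < 2*(e0/2^(k + Suc n))"
    using Suc.IH[OF gg(2), of "3*t-2"] Suc.prems(2) by auto
  show ?case
    apply (subst Phi.simps(2))
    apply (subst (2) Phi.simps(2))
    using i1 i3 m pos by auto
qed

lemma Phi_osc: "good k u v \<Longrightarrow> osc d {0..1} (Phi G n k u v) (2*(e0/2^(k+n)))"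
proof (induction n arbitrary: k u v)
  case 0
  have uv: "u \<in> M" "v \<in> M" using good_M[OF 0] by auto
  have "d u v < 2*(e0/2^k)" "d v u < 2*(e0/2^k)" "0 < 2*(e0/2^k)"
    using good_uv[OF 0] commute e0 by auto
  then have "\<forall>s t. d (Phi G 0 k u v s) (Phi G 0 k u v t) < 2*(e0/2^k)"
    using uv by auto
  then show ?case unfolding osc_def by (auto intro!: exI[of _ 1])
next
  case (Suc n)
  have gg: "good (Suc k) u (G k u v 0)" "good (Suc k) (G k u v 1) v" using G_good[OF Suc.prems(1)] by auto
  define e where "e = 2*(e0/2^(k + Suc n))"
  have epos: "e > 0" using e0 by (simp add: e_def)
  have h1: "osc d {0..1} (Phi G n (Suc k) u (G k u v 0)) e"
    using Suc.IH[OF gg(1)] by (simp add: e_def)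
  have h3: "osc d {0..1} (Phi G n (Suc k) (G k u v 1) v) e"
    using Suc.IH[OF gg(2)] by (simp add: e_def)
  have h2: "osc d {0..1} (G k u v) e" using path_osc[OF G_path[OF Suc.prems(1)] epos] .
  have p1: "osc d {0..1/3} (Phi G (Suc n) k u v) e"
  proof -
    have "osc d {0/3..(0+1)/3} (\<lambda>s. Phi G n (Suc k) u (G k u v 0) (3 * s - 0)) e"
      by (rule osc_affine[OF h1]) simp
    then show ?thesis by (subst osc_cong[where g="\<lambda>s. Phi G n (Suc k) u (G k u v 0) (3 * s - 0)"]) auto
  qed
  have p2: "osc d {1/3..2/3} (Phi G (Suc n) k u v) e"
  proof -
    have "osc d {1/3..(1+1)/3} (\<lambda>s. G k u v (3 * s - 1)) e"
      by (rule osc_affine[OF h2]) simp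
    moreover have "Phi G (Suc n) k u v s = G k u v (3 * s - 1)" if "s \<in> {1/3..2/3}" for s
    proof (cases "s = 1/3")
      case True then have "3 * s = 1" by simp
      then show ?thesis by simp
    next
      case False then show ?thesis using that by auto
    qed
    ultimately show ?thesis by (subst osc_cong[where g="\<lambda>s. G k u v (3 * s - 1)"]) auto
  qed
  have p3: "osc d {2/3..1} (Phi G (Suc n) k u v) e"
  proof -
    have "osc d {2/3..(2+1)/3} (\<lambda>s. Phi G n (Suc k) (G k u v 1) v (3 * s - 2)) e"
      by (rule osc_affine[OF h3]) simp
    moreover have "Phi G (Suc n) k u v s = Phi G n (Suc k) (G k u v 1) v (3 * s - 2)" if "s \<in> {2/3..1}" for s
    proof (cases "s = 2/3")
      case True then have "3 * s = 2" by simp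
      then show ?thesis by simp
    next
      case False then show ?thesis using that by auto
    qed
    ultimately show ?thesis by (subst osc_cong[where g="\<lambda>s. Phi G n (Suc k) (G k u v 1) v (3 * s - 2)"]) auto
  qed
  have "osc d {1/3..1} (Phi G (Suc n) k u v) e"
    by (rule osc_glue[OF p2 p3]) auto
  then have "osc d {0..1} (Phi G (Suc n) k u v) e"
    by (rule osc_glue[OF p1]) auto
  then show ?case unfolding e_def by (simp del: Phi.simps)
qed

lemma Phi_cauchy: "good k u v \<Longrightarrow> t \<in> {0..1} \<Longrightarrow>
   d (Phi G n k u v t) (Phi G (n+j) k u v t) \<le> 4*(e0/2^(k+n)) - 4*(e0/2^(k+n+j))"
proof (induction j)
  case 0
  then show ?case using Phi_M by auto
next
  case (Suc j)
  have "d (Phi G n k u v t) (Phi G (n+Suc j) k u v t)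
     \<le> d (Phi G n k u v t) (Phi G (n+j) k u v t) + d (Phi G (n+j) k u v t) (Phi G (Suc (n+j)) k u v t)"
    unfolding add_Suc_right by (meson triangle Phi_M Suc.prems)
  also have "\<dots> \<le> (4*(e0/2^(k+n)) - 4*(e0/2^(k+n+j))) + 2*(e0/2^(k+n+j))"
    using Suc.IH[OF Suc.prems] Phi_step[OF Suc.prems, of "n+j"] commute
    by (simp add: add.assoc)
  also have "\<dots> = 4*(e0/2^(k+n)) - 4*(e0/2^(k+n+Suc j))"
    by (simp add: field_simps)
  finally show ?case .
qed

lemma limit_path:
  assumes comp: "mcomplete" and gxy: "good 0 x y"
  shows "\<exists>g. pathin mtopology g \<and> g 0 = x \<and> g 1 = y \<and> (\<forall>t\<in>{0..1}. d x (g t) \<le> d x y + 4*e0)"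
proof -
  define f where "f n t = Phi G n 0 x y t" for n t
  have fM: "t \<in> {0..1} \<Longrightarrow> f n t \<in> M" for n t using Phi_M[OF gxy] by (simp add: f_def)
  have fc: "t \<in> {0..1} \<Longrightarrow> n \<le> m \<Longrightarrow> d (f n t) (f m t) \<le> 4*(e0/2^n)" for n m t
  proof -
    assume t: "t \<in> {0..1}" and nm: "n \<le> m"
    then obtain j where "m = n + j" using le_Suc_ex by blast
    moreover have "0 \<le> 4*(e0/2^(n+j))" using e0 by simp
    ultimately show ?thesis using Phi_cauchy[OF gxy t, of n j] unfolding f_def by simp
  qed
  have cau: "MCauchy (\<lambda>n. f n t)" if t: "t \<in> {0..1}" for t
    unfolding MCauchy_def
  proof (intro conjI allI impI)
    show "range (\<lambda>n. f n t) \<subseteq> M" using fM t by auto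
    fix \<epsilon> :: real assume "\<epsilon> > 0"
    then obtain N where N: "e0/2^N < \<epsilon>/4" using small_n e0 by (metis zero_less_divide_iff zero_less_numeral)
    show "\<exists>N. \<forall>n n'. N \<le> n \<longrightarrow> N \<le> n' \<longrightarrow> d (f n t) (f n' t) < \<epsilon>"
    proof (intro exI allI impI)
      fix n n' assume nN: "N \<le> n" "N \<le> n'"
      have mono: "e0/2^p \<le> e0/2^N" if "N \<le> p" for p
        using e0 that by (simp add: frac_le)
      show "d (f n t) (f n' t) < \<epsilon>"
      proof (cases "n \<le> n'")
        case True then show ?thesis using fc[OF t True] mono[OF nN(1)] N by linarith
      next
        case False then have nn: "n' \<le> n" by simp
        have "d (f n t) (f n' t) = d (f n' t) (f n t)" by (rule commute)
        then show ?thesis using fc[OF t nn] mono[OF nN(2)] N by linarith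
      qed
    qed
  qed
  define L where "L t = (SOME l. limitin mtopology (\<lambda>n. f n t) l sequentially)" for t
  have Llim: "limitin mtopology (\<lambda>n. f n t) (L t) sequentially" if "t \<in> {0..1}" for t
    unfolding L_def by (rule someI_ex) (use comp cau[OF that] in \<open>auto simp: mcomplete_def\<close>)
  have LM: "t \<in> {0..1} \<Longrightarrow> L t \<in> M" for t using Llim limitin_mspace by blast
  have Lb: "d (f n t) (L t) \<le> 4*(e0/2^n)" if t: "t \<in> {0..1}" for n t
    by (rule lim_le[OF Llim[OF t] fM[OF t], of n]) (use fc[OF t] in auto)
  have L0: "L 0 = x"
  proof -
    have "f n 0 = x" for n by (simp add: f_def)
    moreover have "x \<in> M" using good_M[OF gxy] by auto
    ultimately have "limitin mtopology (\<lambda>n. f n 0) x sequentially" by simp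
    then show ?thesis using Llim[of 0] limitin_metric_unique trivial_limit_sequentially by (metis atLeastAtMost_iff order_refl zero_le_one)
  qed
  have L1: "L 1 = y"
  proof -
    have "f n 1 = y" for n by (simp add: f_def)
    moreover have "y \<in> M" using good_M[OF gxy] by auto
    ultimately have "limitin mtopology (\<lambda>n. f n 1) y sequentially" by simp
    then show ?thesis using Llim[of 1] limitin_metric_unique trivial_limit_sequentially by (metis atLeastAtMost_iff order_refl zero_le_one)
  qed
  have cont: "pathin mtopology L"
    unfolding pathin_def continuous_map_to_metric topspace_euclidean_subtopology
  proof (intro ballI allI impI)
    fix t :: real and \<epsilon> :: real assume t: "t \<in> {0..1}" and "\<epsilon> > 0"
    then obtain n where n: "e0/2^n < \<epsilon>/12" using small_n e0 by (metis zero_less_divide_iff zero_less_numeral)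
    obtain \<rho> where "\<rho> > 0" and \<rho>: "\<forall>s\<in>{0..1}. \<bar>s - t\<bar> < \<rho> \<longrightarrow> d (f n s) (f n t) < 2*(e0/2^n)"
      using Phi_osc[OF gxy, of n] t unfolding osc_def f_def by (metis add_0)
    show "\<exists>U. openin (top_of_set {0..1}) U \<and> t \<in> U \<and> (\<forall>y\<in>U. L y \<in> mball (L t) \<epsilon>)"
    proof (intro exI conjI ballI)
      show "openin (top_of_set {0..1}) (ball t \<rho> \<inter> {0..1})"
        by (auto simp: openin_subtopology intro!: exI[of _ "ball t \<rho>"])
      show "t \<in> ball t \<rho> \<inter> {0..1}" using t \<open>\<rho>>0\<close> by auto
      fix s assume s: "s \<in> ball t \<rho> \<inter> {0..1}"
      then have s01: "s \<in> {0..1}" and st: "\<bar>s - t\<bar> < \<rho>" by (auto simp: dist_real_def abs_minus_commute)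
      have "d (L t) (L s) \<le> d (L t) (f n t) + d (f n t) (L s)"
        using triangle LM fM t s01 by blast
      also have "\<dots> \<le> d (L t) (f n t) + (d (f n t) (f n s) + d (f n s) (L s))"
        using triangle LM fM t s01 by (meson add_left_mono)
      also have "\<dots> < \<epsilon>"
      proof -
        have a1: "d (L t) (f n t) \<le> 4*(e0/2^n)" using Lb[OF t, of n] commute[of "L t" "f n t"] by simp
        have a2: "d (f n t) (f n s) < 2*(e0/2^n)" using \<rho> s01 st commute[of "f n t" "f n s"] by simp
        have a3: "d (f n s) (L s) \<le> 4*(e0/2^n)" using Lb[OF s01, of n] .
        show ?thesis using a1 a2 a3 n \<open>\<epsilon>>0\<close> by linarith
      qed
      finally show "L s \<in> mball (L t) \<epsilon>" using LM t s01 by simp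
    qed
  qed
  have bnd: "d x (L t) \<le> d x y + 4*e0" if t: "t \<in> {0..1}" for t
  proof -
    have xy: "x \<in> M" "y \<in> M" using good_M[OF gxy] by auto
    have "d x (L t) \<le> d x (f 0 t) + d (f 0 t) (L t)" using triangle xy fM LM t by blast
    also have "d x (f 0 t) \<le> d x y" using xy by (simp add: f_def)
    finally show ?thesis using Lb[OF t, of 0] by simp
  qed
  show ?thesis using cont L0 L1 bnd by blast
qed

end


context Metric_space
begin

lemma P_lemma:
  assumes L: "locally_almost_arcwise_connected mtopology" and x: "x \<in> M" and e: "e > 0"
  shows "\<exists>\<delta>>0. \<delta> \<le> e \<and> (\<forall>A B. openin mtopology A \<and> A \<noteq> {} \<and> A \<subseteq> mball x \<delta> \<and>
      openin mtopology B \<and> B \<noteq> {} \<and> B \<subseteq> mball x \<delta> \<longrightarrow>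
      (\<exists>g. pathin mtopology g \<and> g ` {0..1} \<subseteq> mball x e \<and> g 0 \<in> A \<and> g 1 \<in> B))"
proof -
  define V where "V = mcball x (e/2)"
  have "nbhd_of mtopology x V"
    unfolding nbhd_of_def V_def
    using x e mball_subset_mcball mcball_subset_mspace
    by (intro conjI exI[of _ "mball x (e/2)"]) auto
  then obtain U where U: "nbhd_of mtopology x U" "U \<subseteq> V"
    and J: "\<forall>A B. openin (subtopology mtopology U) A \<and> A \<noteq> {} \<and>
                  openin (subtopology mtopology U) B \<and> B \<noteq> {} \<longrightarrow>
                  joined_by_arc_in mtopology (mtopology closure_of V) A B"
  proof -
    have "locally_almost_arcwise_connected_at mtopology x"
      using L x unfolding locally_almost_arcwise_connected_def by simp
    then have "\<exists>U. nbhd_of mtopology x U \<and> U \<subseteq> V \<and>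
           (\<forall>A B. openin (subtopology mtopology U) A \<and> A \<noteq> {} \<and>
                  openin (subtopology mtopology U) B \<and> B \<noteq> {} \<longrightarrow>
                  joined_by_arc_in mtopology (mtopology closure_of V) A B)"
      using \<open>nbhd_of mtopology x V\<close> unfolding locally_almost_arcwise_connected_at_def by blast
    then show ?thesis using that by blast
  qed
  obtain W where W: "openin mtopology W" "x \<in> W" "W \<subseteq> U" using U(1) unfolding nbhd_of_def by auto
  obtain r where "r > 0" and r: "mball x r \<subseteq> W" using W(1,2) unfolding openin_mtopology by blast
  have clV: "mtopology closure_of V = V" unfolding V_def by (simp add: closure_of_eq)
  have Ve: "V \<subseteq> mball x e" unfolding V_def using e by auto
  show ?thesis
  proof (intro exI[of _ "min r e"] conjI allI impI)
    show "min r e > 0" "min r e \<le> e" using \<open>r>0\<close> e by auto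
    fix A B assume H: "openin mtopology A \<and> A \<noteq> {} \<and> A \<subseteq> mball x (min r e) \<and>
      openin mtopology B \<and> B \<noteq> {} \<and> B \<subseteq> mball x (min r e)"
    have sub: "mball x (min r e) \<subseteq> U" using r W(3) by auto
    have "openin (subtopology mtopology U) A" "openin (subtopology mtopology U) B"
    proof -
      show "openin (subtopology mtopology U) A" unfolding openin_subtopology
      proof (rule exI[of _ A], rule conjI)
        show "openin mtopology A" using H by blast
        show "A = A \<inter> U" using H sub by auto
      qed
      show "openin (subtopology mtopology U) B" unfolding openin_subtopology
      proof (rule exI[of _ B], rule conjI)
        show "openin mtopology B" using H by blast
        show "B = B \<inter> U" using H sub by auto
      qed
    qed
    then have "joined_by_arc_in mtopology (mtopology closure_of V) A B"
      using H by (intro J[rule_format]) simp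
    then obtain g where g: "pathin mtopology g" "g ` {0..1} \<subseteq> mtopology closure_of V" "g 0 \<in> A" "g 1 \<in> B"
      unfolding joined_by_arc_in_def by blast
    have "g ` {0..1} \<subseteq> mball x e" using g(2) clV Ve by simp
    then show "\<exists>g. pathin mtopology g \<and> g ` {0..1} \<subseteq> mball x e \<and> g 0 \<in> A \<and> g 1 \<in> B"
      using g by blast
  qed
qed

lemma G_lemma:
  assumes comp: "mcomplete" and L: "locally_almost_arcwise_connected mtopology"
    and x: "x \<in> M" and \<epsilon>: "\<epsilon> > 0"
  shows "\<exists>\<delta>>0. \<forall>y\<in>mball x \<delta>. \<exists>g. pathin mtopology g \<and> g 0 = x \<and> g 1 = y \<and> g ` {0..1} \<subseteq> mball x \<epsilon>"
proof -
  obtain \<delta>f where \<delta>f: "\<And>c e. c \<in> M \<Longrightarrow> e > 0 \<Longrightarrow> \<delta>f c e > 0 \<and> \<delta>f c e \<le> e \<and>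
      (\<forall>A B. openin mtopology A \<and> A \<noteq> {} \<and> A \<subseteq> mball c (\<delta>f c e) \<and>
      openin mtopology B \<and> B \<noteq> {} \<and> B \<subseteq> mball c (\<delta>f c e) \<longrightarrow>
      (\<exists>g. pathin mtopology g \<and> g ` {0..1} \<subseteq> mball c e \<and> g 0 \<in> A \<and> g 1 \<in> B))"
    using P_lemma[OF L] by metis
  define e0 where "e0 = \<epsilon>/8"
  have e0: "e0 > 0" using \<epsilon> by (simp add: e0_def)
  define good where "good k u v \<longleftrightarrow> (\<exists>c. u \<in> mball c (\<delta>f c (e0/2^k)) \<and> v \<in> mball c (\<delta>f c (e0/2^k)))"
    for k u v
  have S: "\<exists>g. pathin mtopology g \<and> (\<forall>t\<in>{0..1}. d u (g t) < 2*(e0/2^k) \<and> d v (g t) < 2*(e0/2^k))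
     \<and> good (Suc k) u (g 0) \<and> good (Suc k) (g 1) v" if gk: "good k u v" for k u v
  proof -
    define E where "E = e0/2^k"
    define E' where "E' = e0/2^(Suc k)"
    have E: "E > 0" "E' > 0" using e0 by (auto simp: E_def E'_def)
    obtain c where c: "u \<in> mball c (\<delta>f c E)" "v \<in> mball c (\<delta>f c E)"
      using gk unfolding good_def E_def by blast
    have cM: "c \<in> M" "u \<in> M" "v \<in> M" using c by auto
    define D where "D = \<delta>f c E"
    have D: "D > 0" "D \<le> E" using \<delta>f[OF cM(1) E(1)] by (auto simp: D_def)
    define r where "r = min (min (D - d c u) (D - d c v)) (min (\<delta>f u E') (\<delta>f v E'))"
    have r: "r > 0" using c \<delta>f[OF cM(2) E(2)] \<delta>f[OF cM(3) E(2)] by (auto simp: r_def D_def)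
    have subA: "mball u r \<subseteq> mball c D"
    proof
      fix z assume z: "z \<in> mball u r"
      then have "d c z \<le> d c u + d u z" using triangle cM by auto
      then show "z \<in> mball c D" using z cM by (auto simp: r_def)
    qed
    have subB: "mball v r \<subseteq> mball c D"
    proof
      fix z assume z: "z \<in> mball v r"
      then have "d c z \<le> d c v + d v z" using triangle cM by auto
      then show "z \<in> mball c D" using z cM by (auto simp: r_def)
    qed
    obtain g where g: "pathin mtopology g" "g ` {0..1} \<subseteq> mball c E" "g 0 \<in> mball u r" "g 1 \<in> mball v r"
    proof -
      have Pc: "\<forall>A B. openin mtopology A \<and> A \<noteq> {} \<and> A \<subseteq> mball c D \<and>
          openin mtopology B \<and> B \<noteq> {} \<and> B \<subseteq> mball c D \<longrightarrow>
          (\<exists>g. pathin mtopology g \<and> g ` {0..1} \<subseteq> mball c E \<and> g 0 \<in> A \<and> g 1 \<in> B)"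
        using \<delta>f[OF cM(1) E(1)] unfolding D_def by blast
      have ne: "mball u r \<noteq> {}" "mball v r \<noteq> {}"
        using r cM centre_in_mball_iff by blast+
      have "\<exists>g. pathin mtopology g \<and> g ` {0..1} \<subseteq> mball c E \<and> g 0 \<in> mball u r \<and> g 1 \<in> mball v r"
        by (rule Pc[rule_format]) (use ne subA subB in simp)
      then show ?thesis using that by blast
    qed
    show ?thesis
    proof (intro exI[of _ g] conjI ballI)
      show "pathin mtopology g" by fact
      fix t :: real assume t: "t \<in> {0..1}"
      then have gt: "g t \<in> mball c E" using g(2) by blast
      have "d u (g t) \<le> d u c + d c (g t)" using triangle cM gt by auto
      then show "d u (g t) < 2*(e0/2^k)" using c gt D commute[of u c] unfolding E_def D_def by auto
      have "d v (g t) \<le> d v c + d c (g t)" using triangle cM gt by auto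
      then show "d v (g t) < 2*(e0/2^k)" using c gt D commute[of v c] unfolding E_def D_def by auto
    next
      have "\<delta>f u E' > 0" "\<delta>f v E' > 0" using \<delta>f[OF cM(2) E(2)] \<delta>f[OF cM(3) E(2)] by auto
      moreover have "r \<le> \<delta>f u E'" "r \<le> \<delta>f v E'" by (auto simp: r_def)
      ultimately have ok: "r \<le> \<delta>f u E'" "r \<le> \<delta>f v E'" "\<delta>f u E' > 0" "\<delta>f v E' > 0" by auto
      show "good (Suc k) u (g 0)"
        unfolding good_def using g(3) cM ok
        by (auto simp: E'_def intro!: exI[of _ u])
      show "good (Suc k) (g 1) v"
        unfolding good_def using g(4) cM ok commute[of v "g 1"]
        by (auto simp: E'_def intro!: exI[of _ v])
    qed
  qed
  define G where "G k u v = (SOME g. pathin mtopology g \<and> (\<forall>t\<in>{0..1}. d u (g t) < 2*(e0/2^k) \<and> d v (g t) < 2*(e0/2^k))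
     \<and> good (Suc k) u (g 0) \<and> good (Suc k) (g 1) v)" for k u v
  have GS: "pathin mtopology (G k u v) \<and> (\<forall>t\<in>{0..1}. d u (G k u v t) < 2*(e0/2^k) \<and> d v (G k u v t) < 2*(e0/2^k))
     \<and> good (Suc k) u (G k u v 0) \<and> good (Suc k) (G k u v 1) v" if "good k u v" for k u v
    unfolding G_def by (rule someI_ex[OF S[OF that]])
  interpret gl: gluer M d good G e0
  proof
    show "e0 > 0" by fact
    fix k u v
    assume gk: "good k u v"
    then obtain c where c: "u \<in> mball c (\<delta>f c (e0/2^k))" "v \<in> mball c (\<delta>f c (e0/2^k))"
      unfolding good_def by blast
    have cM: "c \<in> M" "u \<in> M" "v \<in> M" using c by auto
    show "u \<in> M \<and> v \<in> M" using cM by auto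
    have "\<delta>f c (e0/2^k) \<le> e0/2^k" using \<delta>f[OF cM(1)] e0 by simp
    moreover have "d u v \<le> d c u + d c v" using triangle'' cM by blast
    ultimately show "d u v < 2 * (e0/2^k)" using c by auto
    show "pathin mtopology (G k u v)" using GS[OF gk] by blast
    show "good (Suc k) u (G k u v 0) \<and> good (Suc k) (G k u v 1) v" using GS[OF gk] by blast
    fix t :: real assume "t \<in> {0..1}"
    then show "d u (G k u v t) < 2*(e0/2^k) \<and> d v (G k u v t) < 2*(e0/2^k)" using GS[OF gk] by blast
  qed
  have dx: "\<delta>f x e0 > 0" "\<delta>f x e0 \<le> e0" using \<delta>f[OF x e0] by auto
  show ?thesis
  proof (intro exI[of _ "\<delta>f x e0"] conjI ballI)
    show "\<delta>f x e0 > 0" by fact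
    fix y assume y: "y \<in> mball x (\<delta>f x e0)"
    have "good 0 x y" unfolding good_def using y x dx by (auto intro!: exI[of _ x])
    then obtain g where g: "pathin mtopology g" "g 0 = x" "g 1 = y"
        "\<forall>t\<in>{0..1}. d x (g t) \<le> d x y + 4*e0"
      using gl.limit_path[OF comp] by blast
    have "g ` {0..1} \<subseteq> mball x \<epsilon>"
    proof
      fix z assume "z \<in> g ` {0..1}"
      then obtain t where t: "t \<in> {0..1}" "z = g t" by auto
      have "g t \<in> M" using pathin_M[OF g(1) t(1)] .
      moreover have "d x (g t) < \<epsilon>" using g(4) t y dx e0_def by fastforce
      ultimately show "z \<in> mball x \<epsilon>" using x t by simp
    qed
    then show "\<exists>g. pathin mtopology g \<and> g 0 = x \<and> g 1 = y \<and> g ` {0..1} \<subseteq> mball x \<epsilon>"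
      using g by blast
  qed
qed

end

theorem mainTheorem13:
  fixes X :: "'a topology"
  assumes "completely_metrizable_space X"
    and "almost_arcwise_connected X"
    and "locally_almost_arcwise_connected X"
  shows "path_connected_space X \<and> locally_path_connected_space X"
proof -
  obtain M d where md: "Metric_space M d" "Metric_space.mcomplete M d" "X = Metric_space.mtopology M d"
    using assms(1) unfolding completely_metrizable_space_def by blast
  interpret m: Metric_space M d by (rule md(1))
  have comp: "m.mcomplete" using md(2) .
  have LA: "locally_almost_arcwise_connected m.mtopology" using assms(3) md(3) by simp
  have lpc: "locally_path_connected_space m.mtopology"
    unfolding locally_path_connected_space_im_kleinen
  proof (intro allI impI)
    fix V x assume Vx: "openin m.mtopology V \<and> x \<in> V"
    then have VM: "V \<subseteq> M" and Vb: "\<forall>x. x \<in> V \<longrightarrow> (\<exists>r>0. m.mball x r \<subseteq> V)"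
      unfolding m.openin_mtopology by auto
    have xM: "x \<in> M" using Vx VM by auto
    obtain \<epsilon> where "\<epsilon> > 0" and eps: "m.mball x \<epsilon> \<subseteq> V" using Vx Vb by auto
    obtain \<delta> where "\<delta> > 0" and del: "\<forall>y\<in>m.mball x \<delta>. \<exists>g. pathin m.mtopology g \<and> g 0 = x \<and> g 1 = y \<and> g ` {0..1} \<subseteq> m.mball x \<epsilon>"
      using m.G_lemma[OF comp LA xM \<open>\<epsilon>>0\<close>] by blast
    show "\<exists>U. openin m.mtopology U \<and> x \<in> U \<and> U \<subseteq> V \<and>
             (\<forall>y\<in>U. \<exists>C. path_connectedin m.mtopology C \<and> C \<subseteq> V \<and> x \<in> C \<and> y \<in> C)"
    proof (rule exI[of _ "m.mball x (min \<delta> \<epsilon>)"], intro conjI ballI)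
      show "openin m.mtopology (m.mball x (min \<delta> \<epsilon>))" by simp
      show "x \<in> m.mball x (min \<delta> \<epsilon>)" using xM \<open>\<delta>>0\<close> \<open>\<epsilon>>0\<close> by simp
      show "m.mball x (min \<delta> \<epsilon>) \<subseteq> V" using eps by auto
      fix y assume "y \<in> m.mball x (min \<delta> \<epsilon>)"
      then have "y \<in> m.mball x \<delta>" by auto
      then obtain g where g: "pathin m.mtopology g" "g 0 = x" "g 1 = y" "g ` {0..1} \<subseteq> m.mball x \<epsilon>"
        using del by blast
      show "\<exists>C. path_connectedin m.mtopology C \<and> C \<subseteq> V \<and> x \<in> C \<and> y \<in> C"
      proof (rule exI[of _ "g ` {0..1}"], intro conjI)
        show "path_connectedin m.mtopology (g ` {0..1})" using path_connectedin_path_image[OF g(1)] .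
        show "g ` {0..1} \<subseteq> V" using g(4) eps by (rule order_trans)
        show "x \<in> g ` {0..1}" using g(2) by (metis atLeastAtMost_iff image_eqI order_refl zero_le_one)
        show "y \<in> g ` {0..1}" using g(3) by (metis atLeastAtMost_iff image_eqI order_refl zero_le_one)
      qed
    qed
  qed
  have pc: "path_connected_space m.mtopology"
    unfolding path_connected_space_iff_path_component
  proof (intro ballI)
    fix x y assume x: "x \<in> topspace m.mtopology" and y: "y \<in> topspace m.mtopology"
    define A where "A = Collect (path_component_of m.mtopology x)"
    define B where "B = Collect (path_component_of m.mtopology y)"
    have "openin m.mtopology A" "openin m.mtopology B"
      using openin_path_component_of_locally_path_connected_space[OF lpc] by (auto simp: A_def B_def)
    moreover have "x \<in> A" "y \<in> B"
      using x y path_component_of_refl[of m.mtopology x] path_component_of_refl[of m.mtopology y]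
      by (auto simp: A_def B_def)
    moreover have "almost_arcwise_connected m.mtopology" using assms(2) unfolding md(3) .
    ultimately have "joined_by_arc_in m.mtopology (topspace m.mtopology) A B"
      unfolding almost_arcwise_connected_def
    proof -
      assume o: "openin m.mtopology A" "openin m.mtopology B" and xy: "x \<in> A" "y \<in> B"
        and aac: "\<forall>A B. openin m.mtopology A \<and> A \<noteq> {} \<and> openin m.mtopology B \<and> B \<noteq> {} \<longrightarrow>
            joined_by_arc_in m.mtopology (topspace m.mtopology) A B"
      have "A \<noteq> {}" "B \<noteq> {}" using xy by auto
      then show ?thesis using aac o by blast
    qed
    then have "\<exists>g. pathin m.mtopology g \<and> g ` {0..1} \<subseteq> topspace m.mtopology \<and> g 0 \<in> A \<and> g 1 \<in> B"
      unfolding joined_by_arc_in_def .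
    then obtain g where g: "pathin m.mtopology g" "g 0 \<in> A" "g 1 \<in> B"
      by blast
    have "path_component_of m.mtopology (g 0) (g 1)" using g(1) unfolding path_component_of_def by blast
    moreover have "path_component_of m.mtopology x (g 0)" using g(2) by (simp add: A_def)
    moreover have "path_component_of m.mtopology (g 1) y"
    proof -
      have "path_component_of m.mtopology y (g 1)" using g(3) by (simp add: B_def)
      then show ?thesis by (rule path_component_of_sym)
    qed
    ultimately show "path_component_of m.mtopology x y"
      by (meson path_component_of_trans)
  qed
  show ?thesis using pc lpc md(3) by simp
qed

end
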